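(* Let $P_1\subseteq P_2$ be meet semilattices with $0$ such that $P_1\subseteq P_2$ preserves finite covers and is tight, and let $Y=\bigcup_{x\in P_1}V^{P_2}_x\subseteq T(P_2)$. Then the image of $\mathcal T_c(P_1)$ in $\mathcal T_c(P_2)$ under $U\mapsto re^{-1}(U)$ is exactly the set of compact open subsets of $T(P_2)$ contained in $Y$.
   Context: A meet semilattice with $0$ is a meet semilattice with least element $0$; $P_1\subseteq P_2$ means an injective meet- and $0$-preserving map identifying $P_1$ with a subset of $P_2$. A filter of $P$ is a subset $F$ with $\emptyset\ne F\ne P$, closed upwards and under $\wedge$; $F(P)$ has the topology generated by $U_x=\{F:x\in F\}$, with basis of compact open sets $U_{(x:x_1,\dots,x_n)}=\{F:x\in F,\ x_1,\dots,x_n\notin F\}$. The tight filters $T(P)$ are the closure of the ultrafilters in $F(P)$; $V^P_{(x:x_1,\dots,x_n)}=U_{(x:x_1,\dots,x_n)}\cap T(P)$, $V^P_x=V^P_{(x:)}$. $\mathcal T_c(P)$ is the generalized Boolean algebra of compact open subsets of $T(P)$. A finite cover of $x\in P$ is a finite set of elements $\le x$ such that every $0\ne y\le x$ meets one of them nontrivially; $P_1\subseteq P_2$ preserves finite covers if every finite cover in $P_1$ of $x\in P_1$ is a finite cover of $x$ in $P_2$. In that case $re:T(P_2)\dashrightarrow T(P_1)$, $\xi\mapsto\xi\cap P_1$ (defined when nonempty), is a partial map to tight filters and $U\mapsto re^{-1}(U)$ is an injective generalized Boolean algebra morphism $\mathcal T_c(P_1)\to\mathcal T_c(P_2)$; $P_1\subseteq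 P_2$ is called tight if its image is an ideal (closed under unions and under intersection with arbitrary elements of $\mathcal T_c(P_2)$). *)

theory Defs
  imports "HOL-Analysis.Analysis"
begin

text \<open>A meet semilattice with 0 is modelled by a type of sort
  semilattice_inf and order_bot (bot is the least element 0).\<close>

definition is_filter :: "'a::{semilattice_inf,order_bot} set \<Rightarrow> bool" where
  "is_filter F \<longleftrightarrow> F \<noteq> {} \<and> F \<noteq> UNIV
     \<and> (\<forall>x y. x \<in> F \<and> x \<le> y \<longrightarrow> y \<in> F)
     \<and> (\<forall>x y. x \<in> F \<and> y \<in> F \<longrightarrow> inf x y \<in> F)"

definition filters :: "'a::{semilattice_inf,order_bot} set set" where
  "filters = {F. is_filter F}"

definition Ux :: "'a::{semilattice_inf,order_bot} \<Rightarrow> 'a set set" where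
  "Ux x = {F \<in> filters. x \<in> F}"

text \<open>Topology on the filters: generated by the sets U_x and their complements,
  so that the sets U_(x:x1,...,xn) form a basis.\<close>
definition filter_topology :: "'a::{semilattice_inf,order_bot} set topology" where
  "filter_topology = topology_generated_by {S. \<exists>x. S = Ux x \<or> S = filters - Ux x}"

definition ultrafilters :: "'a::{semilattice_inf,order_bot} set set" where
  "ultrafilters = {F \<in> filters. \<forall>G \<in> filters. F \<subseteq> G \<longrightarrow> G = F}"

definition tight_filters :: "'a::{semilattice_inf,order_bot} set set" where
  "tight_filters = filter_topology closure_of ultrafilters"

definition tight_topology :: "'a::{semilattice_inf,order_bot} set topology" where
  "tight_topology = subtopology filter_topology tight_filters"

definition Vx :: "'a::{semilattice_inf,order_bot} \<Rightarrow> 'a set set" where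
  "Vx x = Ux x \<inter> tight_filters"

definition Tc :: "'a::{semilattice_inf,order_bot} set set set" where
  "Tc = {U. openin tight_topology U \<and> compactin tight_topology U}"

definition finite_cover :: "'a::{semilattice_inf,order_bot} set \<Rightarrow> 'a \<Rightarrow> bool" where
  "finite_cover C x \<longleftrightarrow> finite C \<and> (\<forall>c\<in>C. c \<le> x)
     \<and> (\<forall>y. y \<noteq> bot \<and> y \<le> x \<longrightarrow> (\<exists>c\<in>C. inf c y \<noteq> bot))"

text \<open>P1 \<subseteq> P2: an injective map preserving meets and 0.\<close>
definition semilattice_embedding ::
  "('a::{semilattice_inf,order_bot} \<Rightarrow> 'b::{semilattice_inf,order_bot}) \<Rightarrow> bool" where
  "semilattice_embedding \<iota> \<longleftrightarrow> inj \<iota> \<and> (\<forall>x y. \<iota> (inf x y) = inf (\<iota> x) (\<iota> y)) \<and> \<iota> bot = bot"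

definition preserves_finite_covers ::
  "('a::{semilattice_inf,order_bot} \<Rightarrow> 'b::{semilattice_inf,order_bot}) \<Rightarrow> bool" where
  "preserves_finite_covers \<iota> \<longleftrightarrow>
     (\<forall>C x. finite_cover C x \<longrightarrow> finite_cover (\<iota> ` C) (\<iota> x))"

text \<open>re : T(P2) -> T(P1), xi |-> xi \<inter> P1 (defined when nonempty), and re^{-1}(U).\<close>
definition re_preimage ::
  "('a::{semilattice_inf,order_bot} \<Rightarrow> 'b::{semilattice_inf,order_bot}) \<Rightarrow> 'a set set \<Rightarrow> 'b set set" where
  "re_preimage \<iota> U = {\<xi> \<in> tight_filters. \<iota> -` \<xi> \<noteq> {} \<and> \<iota> -` \<xi> \<in> U}"

definition tight_inclusion ::
  "('a::{semilattice_inf,order_bot} \<Rightarrow> 'b::{semilattice_inf,order_bot}) \<Rightarrow> bool" where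
  "tight_inclusion \<iota> \<longleftrightarrow>
     (let I = re_preimage \<iota> ` (Tc :: 'a set set set) in
       (\<forall>A\<in>I. \<forall>B\<in>I. A \<union> B \<in> I) \<and> (\<forall>A\<in>I. \<forall>W\<in>(Tc :: 'b set set set). A \<inter> W \<in> I))"

end

theory Submission
  imports Defs
begin

definition Bx :: "'a::{semilattice_inf,order_bot} \<Rightarrow> 'a set \<Rightarrow> 'a set set" where
  "Bx x Z = {F \<in> filters. x \<in> F \<and> Z \<inter> F = {}}"

lemma filt_bot: "F \<in> filters \<Longrightarrow> (bot::'a::{semilattice_inf,order_bot}) \<notin> F"
proof
  assume F: "F \<in> filters" and b: "bot \<in> F"
  have up: "\<forall>x y. x \<in> F \<and> x \<le> y \<longrightarrow> y \<in> F" and nu: "F \<noteq> UNIV"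
    using F unfolding filters_def is_filter_def by auto
  have "\<forall>y. y \<in> F" using up b bot_least by blast
  then have "F = UNIV" by auto
  then show False using nu by simp
qed

lemma filt_up: "F \<in> filters \<Longrightarrow> x \<in> F \<Longrightarrow> x \<le> y \<Longrightarrow> (y::'a::{semilattice_inf,order_bot}) \<in> F"
  unfolding filters_def is_filter_def by blast

lemma filt_inf: "F \<in> filters \<Longrightarrow> x \<in> F \<Longrightarrow> y \<in> F \<Longrightarrow> inf x (y::'a::{semilattice_inf,order_bot}) \<in> F"
  unfolding filters_def is_filter_def by blast

lemma filt_ne: "F \<in> filters \<Longrightarrow> F \<noteq> {}"
  unfolding filters_def is_filter_def by blast

lemma topspace_FT: "topspace (filter_topology :: 'a::{semilattice_inf,order_bot} set topology) = filters"
proof -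
  have "\<Union>{S. \<exists>x::'a. S = Ux x \<or> S = filters - Ux x} = filters"
  proof
    show "\<Union>{S. \<exists>x::'a. S = Ux x \<or> S = filters - Ux x} \<subseteq> filters" by (auto simp: Ux_def)
    show "filters \<subseteq> \<Union>{S. \<exists>x::'a. S = Ux x \<or> S = filters - Ux x}"
    proof
      fix F :: "'a set" assume F: "F \<in> filters"
      show "F \<in> \<Union>{S. \<exists>x::'a. S = Ux x \<or> S = filters - Ux x}"
      proof (cases "F \<in> Ux bot")
        case True then show ?thesis by blast
      next
        case False then have "F \<in> filters - Ux bot" using F by blast
        then show ?thesis by blast
      qed
    qed
  qed
  then show ?thesis unfolding filter_topology_def by simp
qed

lemma open_Ux: "openin filter_topology (Ux (x::'a::{semilattice_inf,order_bot}))"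
  unfolding filter_topology_def by (rule topology_generated_by_Basis) blast

lemma open_cUx: "openin filter_topology (filters - Ux (x::'a::{semilattice_inf,order_bot}))"
  unfolding filter_topology_def by (rule topology_generated_by_Basis) blast

lemma Bx_empty: "Bx x {} = Ux x"
  by (auto simp: Bx_def Ux_def)

lemma open_Bx: "finite Z \<Longrightarrow> openin filter_topology (Bx (x::'a::{semilattice_inf,order_bot}) Z)"
proof (induction Z rule: finite_induct)
  case empty then show ?case by (simp add: Bx_empty open_Ux)
next
  case (insert z Z)
  have "Bx x (insert z Z) = Bx x Z \<inter> (filters - Ux z)"
    by (auto simp: Bx_def Ux_def)
  then show ?case using insert.IH open_cUx[of z] by (metis openin_Int)
qed

lemma Bx_sub: "Bx x Z \<subseteq> filters" by (auto simp: Bx_def)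

lemma basis_lemma:
  assumes "openin filter_topology N" "p \<in> N"
  shows "\<exists>(x::'a::{semilattice_inf,order_bot}) Z. finite Z \<and> p \<in> Bx x Z \<and> Bx x Z \<subseteq> N"
proof -
  have g: "generate_topology_on {S. \<exists>x::'a. S = Ux x \<or> S = filters - Ux x} N"
    using assms(1) unfolding filter_topology_def by (simp add: openin_topology_generated_by_iff)
  have pf: "p \<in> filters" using assms topspace_FT openin_subset by blast
  have "\<forall>p\<in>N. p \<in> filters \<longrightarrow> (\<exists>(x::'a) Z. finite Z \<and> p \<in> Bx x Z \<and> Bx x Z \<subseteq> N)"
    using g
  proof induction
    case Empty then show ?case by simp
  next
    case (Int a b)
    show ?case
    proof (intro ballI impI)
      fix p assume p: "p \<in> a \<inter> b" "p \<in> filters"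
      obtain x1 Z1 where 1: "finite Z1" "p \<in> Bx x1 Z1" "Bx x1 Z1 \<subseteq> a" using Int p by blast
      obtain x2 Z2 where 2: "finite Z2" "p \<in> Bx x2 Z2" "Bx x2 Z2 \<subseteq> b" using Int p by blast
      have "p \<in> Bx (inf x1 x2) (Z1 \<union> Z2)"
      proof -
        have pf: "p \<in> filters" "x1 \<in> p" "x2 \<in> p" "Z1 \<inter> p = {}" "Z2 \<inter> p = {}"
          using 1 2 unfolding Bx_def by blast+
        then have "inf x1 x2 \<in> p" using filt_inf by blast
        then show ?thesis using pf unfolding Bx_def by blast
      qed
      moreover have "Bx (inf x1 x2) (Z1 \<union> Z2) \<subseteq> Bx x1 Z1 \<inter> Bx x2 Z2"
      proof
        fix F assume F: "F \<in> Bx (inf x1 x2) (Z1 \<union> Z2)"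
        then have Ff: "F \<in> filters" "inf x1 x2 \<in> F" "(Z1 \<union> Z2) \<inter> F = {}" unfolding Bx_def by blast+
        have "x1 \<in> F" using filt_up[OF Ff(1) Ff(2) inf_le1] .
        moreover have "x2 \<in> F" using filt_up[OF Ff(1) Ff(2) inf_le2] .
        ultimately show "F \<in> Bx x1 Z1 \<inter> Bx x2 Z2" using Ff unfolding Bx_def by blast
      qed
      moreover have "finite (Z1 \<union> Z2)" using 1 2 by blast
      ultimately show "\<exists>x Z. finite Z \<and> p \<in> Bx x Z \<and> Bx x Z \<subseteq> a \<inter> b"
        using 1(3) 2(3) by blast
    qed
  next
    case (UN K)
    show ?case
    proof (intro ballI impI)
      fix p assume p: "p \<in> \<Union>K" "p \<in> filters"
      then obtain k where k: "k \<in> K" "p \<in> k" by blast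
      have "\<forall>p\<in>k. p \<in> filters \<longrightarrow> (\<exists>(x::'a) Z. finite Z \<and> p \<in> Bx x Z \<and> Bx x Z \<subseteq> k)"
        using UN.IH[OF k(1)] .
      then obtain x Z where "finite Z" "p \<in> Bx (x::'a) Z" "Bx x Z \<subseteq> k" using k p by blast
      then show "\<exists>x Z. finite Z \<and> p \<in> Bx x Z \<and> Bx x Z \<subseteq> \<Union>K" using k by blast
    qed
  next
    case (Basis s)
    then obtain y where s: "s = Ux y \<or> s = filters - Ux y" by blast
    show ?case
    proof (intro ballI impI)
      fix p assume p: "p \<in> s" "p \<in> filters"
      show "\<exists>x Z. finite Z \<and> p \<in> Bx x Z \<and> Bx x Z \<subseteq> s"
      proof (cases "s = Ux y")
        case True
        then show ?thesis using p by (metis Bx_empty finite.emptyI order_refl)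
      next
        case False
        then have s': "s = filters - Ux y" using s by blast
        obtain x where x: "x \<in> p" using filt_ne p by blast
        have "p \<in> Bx x {y}" using p x s' by (auto simp: Bx_def Ux_def)
        moreover have "Bx x {y} \<subseteq> s" using s' by (auto simp: Bx_def Ux_def)
        ultimately show ?thesis by blast
      qed
    qed
  qed
  then show ?thesis using assms pf by blast
qed


lemma closure_char:
  "p \<in> filter_topology closure_of S \<longleftrightarrow>
     p \<in> filters \<and> (\<forall>(x::'a::{semilattice_inf,order_bot}) Z. finite Z \<and> p \<in> Bx x Z \<longrightarrow> Bx x Z \<inter> S \<noteq> {})"
proof
  assume "p \<in> filter_topology closure_of S"
  then have h: "p \<in> filters" "\<And>T. p \<in> T \<and> openin filter_topology T \<Longrightarrow> (\<exists>y. y \<in> S \<and> y \<in> T)"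
    unfolding in_closure_of topspace_FT by auto
  show "p \<in> filters \<and> (\<forall>(x::'a) Z. finite Z \<and> p \<in> Bx x Z \<longrightarrow> Bx x Z \<inter> S \<noteq> {})"
  proof (intro conjI allI impI)
    show "p \<in> filters" by (rule h(1))
    fix x :: 'a and Z assume xz: "finite Z \<and> p \<in> Bx x Z"
    then have "openin filter_topology (Bx x Z)" using open_Bx by auto
    then obtain y where "y \<in> S" "y \<in> Bx x Z" using h(2)[of "Bx x Z"] xz by auto
    then show "Bx x Z \<inter> S \<noteq> {}" by auto
  qed
next
  assume a: "p \<in> filters \<and> (\<forall>(x::'a) Z. finite Z \<and> p \<in> Bx x Z \<longrightarrow> Bx x Z \<inter> S \<noteq> {})"
  show "p \<in> filter_topology closure_of S"
    unfolding in_closure_of topspace_FT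
  proof (intro conjI allI impI)
    show "p \<in> filters" using a by simp
    fix T assume T: "p \<in> T \<and> openin filter_topology T"
    then obtain x Z where xz: "finite Z" "p \<in> Bx (x::'a) Z" "Bx x Z \<subseteq> T" using basis_lemma by metis
    then have "Bx x Z \<inter> S \<noteq> {}" using a by simp
    then obtain y where "y \<in> Bx x Z" "y \<in> S" by auto
    then show "\<exists>y. y \<in> S \<and> y \<in> T" using xz(3) by auto
  qed
qed

lemma ultra_sep:
  assumes "\<eta> \<in> ultrafilters" "(c::'a::{semilattice_inf,order_bot}) \<notin> \<eta>"
  shows "\<exists>y\<in>\<eta>. inf y c = bot"
proof (rule ccontr)
  assume na: "\<not> (\<exists>y\<in>\<eta>. inf y c = bot)"
  have ef: "\<eta> \<in> filters" using assms unfolding ultrafilters_def by blast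
  define G where "G = {w. \<exists>y\<in>\<eta>. inf y c \<le> w}"
  have "G \<in> filters" unfolding filters_def is_filter_def
  proof (intro CollectI conjI allI impI)
    obtain y where "y \<in> \<eta>" using filt_ne ef by blast
    then show "G \<noteq> {}" unfolding G_def by blast
    show "G \<noteq> UNIV"
    proof
      assume "G = UNIV" then have "bot \<in> G" by blast
      then obtain y where "y \<in> \<eta>" "inf y c \<le> bot" unfolding G_def by blast
      then show False using na bot_unique by blast
    qed
    fix x y
    show "x \<in> G \<and> x \<le> y \<Longrightarrow> y \<in> G" unfolding G_def by (blast intro: order_trans)
    assume "x \<in> G \<and> y \<in> G"
    then obtain y1 y2 where "y1\<in>\<eta>" "y2\<in>\<eta>" "inf y1 c \<le> x" "inf y2 c \<le> y" unfolding G_def by blast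
    then have "inf (inf y1 y2) c \<le> inf x y" "inf y1 y2 \<in> \<eta>"
    proof -
      have "inf (inf y1 y2) c \<le> inf y1 c" using inf_mono[OF inf_le1 order_refl] .
      then have 1: "inf (inf y1 y2) c \<le> x" using \<open>inf y1 c \<le> x\<close> by (rule order_trans)
      have "inf (inf y1 y2) c \<le> inf y2 c" using inf_mono[OF inf_le2 order_refl] .
      then have 2: "inf (inf y1 y2) c \<le> y" using \<open>inf y2 c \<le> y\<close> by (rule order_trans)
      show "inf (inf y1 y2) c \<le> inf x y" using 1 2 by (rule le_infI)
      show "inf y1 y2 \<in> \<eta>" using filt_inf[OF ef \<open>y1\<in>\<eta>\<close> \<open>y2\<in>\<eta>\<close>] .
    qed
    then show "inf x y \<in> G" unfolding G_def by blast
  qed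
  moreover have "\<eta> \<subseteq> G" unfolding G_def by (auto intro: inf_le1)
  ultimately have "G = \<eta>" using assms(1) unfolding ultrafilters_def by blast
  moreover obtain y where "y \<in> \<eta>" using filt_ne ef by blast
  then have "c \<in> G" unfolding G_def by (auto intro: inf_le2)
  ultimately show False using assms(2) by blast
qed

lemma meet_sep:
  assumes ef: "\<eta> \<in> filters" and fin: "finite C" and x: "(x::'a::{semilattice_inf,order_bot}) \<in> \<eta>"
    and h: "\<forall>c\<in>C. \<exists>y\<in>\<eta>. inf y c = bot"
  shows "\<exists>y\<in>\<eta>. y \<le> x \<and> (\<forall>c\<in>C. inf y c = bot)"
  using fin h
proof (induction C rule: finite_induct)
  case empty then show ?case using x by blast
next
  case (insert c C)
  then obtain y where y: "y\<in>\<eta>" "y \<le> x" "\<forall>c\<in>C. inf y c = bot" by blast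
  obtain y' where y': "y' \<in> \<eta>" "inf y' c = bot" using insert.prems by blast
  have "inf y y' \<in> \<eta>" using filt_inf[OF ef y(1) y'(1)] .
  moreover have "inf y y' \<le> x" using y(2) by (auto intro: le_infI1)
  moreover have "\<forall>d\<in>insert c C. inf (inf y y') d = bot"
  proof
    fix d assume "d \<in> insert c C"
    then show "inf (inf y y') d = bot"
    proof
      assume "d = c"
      have "inf (inf y y') d \<le> inf y' c" using \<open>d = c\<close> by (auto intro: le_infI1 le_infI2)
      then show ?thesis using y'(2) by (simp add: bot_unique)
    next
      assume "d \<in> C"
      have "inf (inf y y') d \<le> inf y d" by (auto intro: le_infI1 le_infI2)
      then show ?thesis using y(3) \<open>d \<in> C\<close> by (simp add: bot_unique)
    qed
  qed
  ultimately show ?case by blast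
qed

lemma tight_filters_sub: "tight_filters \<subseteq> filters"
  unfolding tight_filters_def using closure_of_subset_topspace topspace_FT by metis

lemma tight_cover:
  assumes "\<xi> \<in> tight_filters" "(x::'a::{semilattice_inf,order_bot}) \<in> \<xi>" "finite_cover C x"
  shows "\<exists>c\<in>C. c \<in> \<xi>"
proof (rule ccontr)
  assume na: "\<not> (\<exists>c\<in>C. c \<in> \<xi>)"
  have fC: "finite C" using assms(3) unfolding finite_cover_def by blast
  have "\<xi> \<in> Bx x C" using na assms tight_filters_sub by (auto simp: Bx_def)
  then have "Bx x C \<inter> ultrafilters \<noteq> {}"
    using assms(1) fC unfolding tight_filters_def closure_char by blast
  then obtain \<eta> where eta: "\<eta> \<in> ultrafilters" "\<eta> \<in> Bx x C" by blast
  have ef: "\<eta> \<in> filters" using eta unfolding ultrafilters_def by blast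
  have "\<forall>c\<in>C. \<exists>y\<in>\<eta>. inf y c = bot" using eta ultra_sep by (auto simp: Bx_def)
  moreover have xeta: "x \<in> \<eta>" using eta unfolding Bx_def by blast
  ultimately obtain y where y: "y\<in>\<eta>" "y \<le> x" "\<forall>c\<in>C. inf y c = bot"
    using meet_sep[OF ef fC xeta] by blast
  have "y \<noteq> bot" using y(1) filt_bot[OF ef] by blast
  then obtain c where "c \<in> C" "inf c y \<noteq> bot" using assms(3) y(2) unfolding finite_cover_def by blast
  then show False using y(3) by (simp add: inf_commute)
qed

lemma exists_ultra:
  assumes "(y::'a::{semilattice_inf,order_bot}) \<noteq> bot"
  shows "\<exists>M\<in>ultrafilters. y \<in> M"
proof -
  define A where "A = {F\<in>filters. y \<in> F}"
  define P where "P = {w. y \<le> w}"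
  have "P \<in> filters" unfolding filters_def is_filter_def
  proof (intro CollectI conjI allI impI)
    have "y \<in> P" unfolding P_def by simp
    then show "P \<noteq> {}" by auto
    show "P \<noteq> UNIV"
    proof
      assume "P = UNIV"
      then have "bot \<in> P" by simp
      then have "y \<le> bot" unfolding P_def by simp
      then show False using assms by (simp add: bot_unique)
    qed
    fix a b
    show "a \<in> P \<and> a \<le> b \<Longrightarrow> b \<in> P" unfolding P_def using order_trans[of y a b] by simp
    show "a \<in> P \<and> b \<in> P \<Longrightarrow> inf a b \<in> P" unfolding P_def by simp
  qed
  moreover have "y \<in> P" unfolding P_def by simp
  ultimately have "P \<in> A" unfolding A_def by simp
  then have "A \<noteq> {}" by auto
  moreover have "\<Union>\<C> \<in> A" if ne: "\<C> \<noteq> {}" and chn: "subset.chain A \<C>" for \<C>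
  proof -
    have CA: "\<C> \<subseteq> A" and ch: "\<forall>F\<in>\<C>. \<forall>G\<in>\<C>. F \<subseteq> G \<or> G \<subseteq> F"
      using chn unfolding subset.chain_def by auto
    have Cf: "F \<in> filters" "y \<in> F" if "F \<in> \<C>" for F using CA that unfolding A_def by auto
    obtain F0 where F0: "F0 \<in> \<C>" using ne by auto
    have "\<Union>\<C> \<in> filters" unfolding filters_def is_filter_def
    proof (intro CollectI conjI allI impI)
      show "\<Union>\<C> \<noteq> {}" using F0 Cf(2)[OF F0] by auto
      show "\<Union>\<C> \<noteq> UNIV"
      proof
        assume "\<Union>\<C> = UNIV"
        then have "bot \<in> \<Union>\<C>" by simp
        then obtain F where "F \<in> \<C>" "bot \<in> F" by auto
        then show False using filt_bot Cf(1) by metis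
      qed
      fix a b
      show "a \<in> \<Union>\<C> \<and> a \<le> b \<Longrightarrow> b \<in> \<Union>\<C>"
      proof -
        assume h: "a \<in> \<Union>\<C> \<and> a \<le> b"
        then obtain F where F: "F \<in> \<C>" "a \<in> F" by auto
        then have "b \<in> F" using filt_up[OF Cf(1)[OF F(1)] F(2)] h by simp
        then show ?thesis using F by auto
      qed
      assume ab: "a \<in> \<Union>\<C> \<and> b \<in> \<Union>\<C>"
      then obtain F G where FG: "F\<in>\<C>" "G\<in>\<C>" "a\<in>F" "b\<in>G" by auto
      show "inf a b \<in> \<Union>\<C>"
      proof (cases "F \<subseteq> G")
        case True
        then have "a \<in> G" using FG by auto
        then have "inf a b \<in> G" using filt_inf[OF Cf(1)[OF FG(2)]] FG(4) by simp
        then show ?thesis using FG by auto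
      next
        case False then have "G \<subseteq> F" using ch FG by auto
        then have "b \<in> F" using FG by auto
        then have "inf a b \<in> F" using filt_inf[OF Cf(1)[OF FG(1)]] FG(3) by simp
        then show ?thesis using FG by auto
      qed
    qed
    moreover have "y \<in> \<Union>\<C>" using F0 Cf(2)[OF F0] by auto
    ultimately show ?thesis unfolding A_def by simp
  qed
  ultimately obtain M where M: "M \<in> A" "\<forall>X\<in>A. M \<subseteq> X \<longrightarrow> X = M"
    using subset_Zorn_nonempty[of A] by auto
  have Mf: "M \<in> filters" "y \<in> M" using M(1) unfolding A_def by auto
  have "\<forall>G\<in>filters. M \<subseteq> G \<longrightarrow> G = M"
  proof (intro ballI impI)
    fix G assume "G \<in> filters" "M \<subseteq> G"
    then have "G \<in> A" using Mf(2) unfolding A_def by auto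
    then show "G = M" using M(2) \<open>M \<subseteq> G\<close> by auto
  qed
  then have "M \<in> ultrafilters" unfolding ultrafilters_def using Mf(1) by simp
  then show ?thesis using Mf(2) by auto
qed

lemma emb_mono:
  assumes "semilattice_embedding \<iota>" "(x::'a::{semilattice_inf,order_bot}) \<le> y"
  shows "\<iota> x \<le> (\<iota> y :: 'b::{semilattice_inf,order_bot})"
proof -
  have "\<iota> x = \<iota> (inf x y)" using assms(2) by (simp add: inf_absorb1)
  also have "\<dots> = inf (\<iota> x) (\<iota> y)" using assms(1) unfolding semilattice_embedding_def by blast
  finally show ?thesis by (metis inf_le2)
qed

lemma pre_filter:
  assumes e: "semilattice_embedding (\<iota> :: 'a::{semilattice_inf,order_bot} \<Rightarrow> 'b::{semilattice_inf,order_bot})"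
    and xf: "\<xi> \<in> filters" and ne: "\<iota> -` \<xi> \<noteq> {}"
  shows "\<iota> -` \<xi> \<in> filters"
  unfolding filters_def is_filter_def
proof (intro CollectI conjI allI impI)
  show "\<iota> -` \<xi> \<noteq> {}" by fact
  have "\<iota> bot = bot" using e unfolding semilattice_embedding_def by blast
  then have "bot \<notin> \<iota> -` \<xi>" using filt_bot[OF xf] by simp
  then show "\<iota> -` \<xi> \<noteq> UNIV" by blast
  fix x y
  show "x \<in> \<iota> -` \<xi> \<and> x \<le> y \<Longrightarrow> y \<in> \<iota> -` \<xi>" using emb_mono[OF e] filt_up[OF xf] by blast
  have "\<iota> (inf x y) = inf (\<iota> x) (\<iota> y)" using e unfolding semilattice_embedding_def by blast
  then show "x \<in> \<iota> -` \<xi> \<and> y \<in> \<iota> -` \<xi> \<Longrightarrow> inf x y \<in> \<iota> -` \<xi>" using filt_inf[OF xf] by auto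
qed

lemma re_tight:
  assumes e: "semilattice_embedding (\<iota> :: 'a::{semilattice_inf,order_bot} \<Rightarrow> 'b::{semilattice_inf,order_bot})"
    and pc: "preserves_finite_covers \<iota>"
    and xt: "\<xi> \<in> tight_filters" and ne: "\<iota> -` \<xi> \<noteq> {}"
  shows "\<iota> -` \<xi> \<in> tight_filters"
proof -
  have xf: "\<xi> \<in> filters" using xt tight_filters_sub by blast
  have ef: "\<iota> -` \<xi> \<in> filters" using pre_filter[OF e xf ne] .
  show ?thesis unfolding tight_filters_def closure_char
  proof (intro conjI allI impI)
    show "\<iota> -` \<xi> \<in> filters" by fact
    fix x :: 'a and Z assume a: "finite Z \<and> \<iota> -` \<xi> \<in> Bx x Z"
    show "Bx x Z \<inter> ultrafilters \<noteq> {}"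
    proof (cases "\<exists>y. y \<noteq> bot \<and> y \<le> x \<and> (\<forall>z\<in>Z. inf y z = bot)")
      case True
      then obtain y where y: "y \<noteq> bot" "y \<le> x" "\<forall>z\<in>Z. inf y z = bot" by blast
      obtain M where M: "M \<in> ultrafilters" "y \<in> M" using exists_ultra[OF y(1)] by blast
      have Mf: "M \<in> filters" using M unfolding ultrafilters_def by blast
      have "x \<in> M" using filt_up[OF Mf M(2) y(2)] .
      moreover have "Z \<inter> M = {}"
      proof (rule ccontr)
        assume "Z \<inter> M \<noteq> {}"
        then obtain z where "z \<in> Z" "z \<in> M" by blast
        then have "inf y z \<in> M" using filt_inf[OF Mf M(2)] by blast
        then show False using y(3) \<open>z \<in> Z\<close> filt_bot[OF Mf] by auto
      qed
      ultimately show ?thesis using M Mf by (auto simp: Bx_def)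
    next
      case False
      define C where "C = (\<lambda>z. inf x z) ` Z"
      have "finite_cover C x" unfolding finite_cover_def C_def
      proof (intro conjI ballI allI impI)
        show "finite ((\<lambda>z. inf x z) ` Z)" using a by blast
        fix c assume "c \<in> (\<lambda>z. inf x z) ` Z" then show "c \<le> x" by auto
      next
        fix y assume y: "y \<noteq> bot \<and> y \<le> x"
        then obtain z where z: "z \<in> Z" "inf y z \<noteq> bot" using False by blast
        have "inf (inf x z) y = inf y z" using y by (metis inf.absorb_iff2 inf_commute inf_left_commute)
        moreover have "inf x z \<in> (\<lambda>z. inf x z) ` Z" using z by blast
        ultimately show "\<exists>c\<in>(\<lambda>z. inf x z) ` Z. inf c y \<noteq> bot" using z by metis
      qed
      then have "finite_cover (\<iota> ` C) (\<iota> x)" using pc unfolding preserves_finite_covers_def by blast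
      moreover have "\<iota> x \<in> \<xi>" using a by (auto simp: Bx_def)
      ultimately obtain c where "c \<in> \<iota> ` C" "c \<in> \<xi>" using tight_cover[OF xt] by blast
      then obtain z where z: "z \<in> Z" "inf x z \<in> \<iota> -` \<xi>" unfolding C_def by auto
      then have "z \<in> \<iota> -` \<xi>" using filt_up[OF ef] inf_le2 by blast
      then show ?thesis using a z by (auto simp: Bx_def)
    qed
  qed
qed


lemma subb_open:
  "s \<in> {S. \<exists>x::'a::{semilattice_inf,order_bot}. S = Ux x \<or> S = filters - Ux x} \<Longrightarrow> openin filter_topology s"
  using open_Ux open_cUx by blast

lemma compact_Ux: "compactin filter_topology (Ux (x::'a::{semilattice_inf,order_bot}))"
proof -
  define subb where "subb = {S. \<exists>x::'a. S = Ux x \<or> S = filters - Ux x}"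
  have Uxf: "Ux x \<subseteq> filters" by (auto simp: Ux_def)
  have "Ux x \<in> subb" unfolding subb_def by (intro CollectI exI disjI1) (rule refl)
  then have h1: "Ux x \<subseteq> \<Union>subb" by (rule Union_upper)
  have h2: "\<exists>C'. finite C' \<and> C' \<subseteq> C \<and> Ux x \<subseteq> \<Union>C'" if C: "C \<subseteq> subb" "Ux x \<subseteq> \<Union>C" for C
  proof -
    define Bs where "Bs = {z. filters - Ux z \<in> C}"
    show "\<exists>C'. finite C' \<and> C' \<subseteq> C \<and> Ux x \<subseteq> \<Union>C'"
    proof (cases "\<exists>B0. finite B0 \<and> B0 \<subseteq> Bs \<and> \<not>(\<exists>F\<in>filters. x\<in>F \<and> B0 \<subseteq> F)")
      case True
      then obtain B0 where B0: "finite B0" "B0 \<subseteq> Bs" "\<not>(\<exists>F\<in>filters. x\<in>F \<and> B0 \<subseteq> F)" by auto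
      show ?thesis
      proof (intro exI conjI)
        show "finite ((\<lambda>z. filters - Ux z) ` B0)" using B0(1) by simp
        show "(\<lambda>z. filters - Ux z) ` B0 \<subseteq> C" using B0(2) unfolding Bs_def by auto
        show "Ux x \<subseteq> \<Union>((\<lambda>z. filters - Ux z) ` B0)"
        proof
          fix F assume F: "F \<in> Ux x"
          then have "F \<in> filters" "x \<in> F" by (auto simp: Ux_def)
          then have "\<not> B0 \<subseteq> F" using B0(3) by auto
          then obtain z where "z \<in> B0" "z \<notin> F" by auto
          then show "F \<in> \<Union>((\<lambda>z. filters - Ux z) ` B0)" using \<open>F \<in> filters\<close> by (auto simp: Ux_def)
        qed
      qed
    next
      case False
      then have ex: "\<And>B0. finite B0 \<Longrightarrow> B0 \<subseteq> Bs \<Longrightarrow> \<exists>F\<in>filters. x\<in>F \<and> B0 \<subseteq> F" by auto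
      define G where "G = {w. \<exists>B0. finite B0 \<and> B0 \<subseteq> Bs \<and> (\<forall>F\<in>filters. x\<in>F \<and> B0\<subseteq>F \<longrightarrow> w\<in>F)}"
      have Gmem: "w \<in> G \<longleftrightarrow> (\<exists>B0. finite B0 \<and> B0 \<subseteq> Bs \<and> (\<forall>F\<in>filters. x\<in>F \<and> B0\<subseteq>F \<longrightarrow> w\<in>F))" for w
        unfolding G_def by simp
      have xG: "x \<in> G" unfolding Gmem by (rule exI[of _ "{}"]) simp
      have BsG: "Bs \<subseteq> G"
      proof
        fix z assume "z \<in> Bs"
        then show "z \<in> G" unfolding Gmem by (intro exI[of _ "{z}"]) simp
      qed
      have Gf: "G \<in> filters" unfolding filters_def is_filter_def
      proof (intro CollectI conjI allI impI)
        show "G \<noteq> {}" using xG by auto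
        show "G \<noteq> UNIV"
        proof
          assume "G = UNIV"
          then have "bot \<in> G" by simp
          then obtain B0 where B0: "finite B0" "B0 \<subseteq> Bs" "\<forall>F\<in>filters. x\<in>F \<and> B0\<subseteq>F \<longrightarrow> bot\<in>F"
            unfolding Gmem by auto
          obtain F where "F \<in> filters" "x\<in>F" "B0 \<subseteq> F" using ex[OF B0(1) B0(2)] by auto
          then show False using B0(3) filt_bot by metis
        qed
        fix a b
        show "a \<in> G \<and> a \<le> b \<Longrightarrow> b \<in> G"
        proof -
          assume ab: "a \<in> G \<and> a \<le> b"
          then obtain B0 where B0: "finite B0" "B0 \<subseteq> Bs" "\<forall>F\<in>filters. x\<in>F \<and> B0\<subseteq>F \<longrightarrow> a\<in>F"
            unfolding Gmem by auto
          have "\<forall>F\<in>filters. x\<in>F \<and> B0\<subseteq>F \<longrightarrow> b\<in>F"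
          proof (intro ballI impI)
            fix F assume "F \<in> filters" "x\<in>F \<and> B0\<subseteq>F"
            then show "b \<in> F" using B0(3) filt_up[of F a b] ab by simp
          qed
          then show "b \<in> G" unfolding Gmem using B0(1,2) by auto
        qed
        assume "a \<in> G \<and> b \<in> G"
        then obtain B1 B2 where B1: "finite B1" "B1 \<subseteq> Bs" "\<forall>F\<in>filters. x\<in>F \<and> B1\<subseteq>F \<longrightarrow> a\<in>F"
          and B2: "finite B2" "B2 \<subseteq> Bs" "\<forall>F\<in>filters. x\<in>F \<and> B2\<subseteq>F \<longrightarrow> b\<in>F"
          unfolding Gmem by auto
        have "\<forall>F\<in>filters. x\<in>F \<and> B1 \<union> B2\<subseteq>F \<longrightarrow> inf a b\<in>F"
        proof (intro ballI impI)
          fix F assume F: "F \<in> filters" "x\<in>F \<and> B1 \<union> B2\<subseteq>F"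
          then have "a \<in> F" "b \<in> F" using B1(3) B2(3) by auto
          then show "inf a b \<in> F" using filt_inf[OF F(1)] by simp
        qed
        moreover have "finite (B1 \<union> B2)" "B1 \<union> B2 \<subseteq> Bs" using B1 B2 by auto
        ultimately show "inf a b \<in> G" unfolding Gmem by auto
      qed
      then have "G \<in> Ux x" using xG by (auto simp: Ux_def)
      then have "G \<in> \<Union>C" using C(2) by auto
      then obtain s where s: "s \<in> C" "G \<in> s" by auto
      then have "s \<in> subb" using C(1) by auto
      then obtain y where sy: "s = Ux y \<or> s = filters - Ux y" unfolding subb_def by auto
      have sUy: "s = Ux y"
      proof (rule ccontr)
        assume "s \<noteq> Ux y"
        then have s2: "s = filters - Ux y" using sy by simp
        then have "y \<in> Bs" using s(1) unfolding Bs_def by simp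
        then have "y \<in> G" using BsG by auto
        then have "G \<in> Ux y" using Gf by (auto simp: Ux_def)
        then show False using s(2) s2 by simp
      qed
      then have "y \<in> G" using s(2) by (auto simp: Ux_def)
      then obtain B0 where B0: "finite B0" "B0 \<subseteq> Bs" "\<forall>F\<in>filters. x\<in>F \<and> B0\<subseteq>F \<longrightarrow> y\<in>F"
        unfolding Gmem by auto
      show ?thesis
      proof (intro exI conjI)
        show "finite (insert (Ux y) ((\<lambda>z. filters - Ux z) ` B0))" using B0(1) by simp
        have "(\<lambda>z. filters - Ux z) ` B0 \<subseteq> C" using B0(2) unfolding Bs_def by auto
        then show "insert (Ux y) ((\<lambda>z. filters - Ux z) ` B0) \<subseteq> C" using s(1) sUy by simp
        show "Ux x \<subseteq> \<Union>(insert (Ux y) ((\<lambda>z. filters - Ux z) ` B0))"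
        proof
          fix F assume F: "F \<in> Ux x"
          then have Ff: "F \<in> filters" "x \<in> F" by (auto simp: Ux_def)
          show "F \<in> \<Union>(insert (Ux y) ((\<lambda>z. filters - Ux z) ` B0))"
          proof (cases "B0 \<subseteq> F")
            case True
            then have "y \<in> F" using B0(3) Ff by simp
            then show ?thesis using Ff by (auto simp: Ux_def)
          next
            case False
            then obtain z where "z \<in> B0" "z \<notin> F" by auto
            then show ?thesis using Ff by (auto simp: Ux_def)
          qed
        qed
      qed
    qed
  qed
  have h3: "topology (arbitrary union_of (finite intersection_of (\<lambda>x. x \<in> subb) relative_to Ux x)) =
      subtopology filter_topology (Ux x)"
  proof (rule topology_base_unique)
    fix B assume "(finite intersection_of (\<lambda>x. x \<in> subb) relative_to Ux x) B"
    then obtain V where V: "(finite intersection_of (\<lambda>x. x \<in> subb)) V" "Ux x \<inter> V = B"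
      unfolding relative_to_def by auto
    then obtain \<U> where U: "finite \<U>" "\<U> \<subseteq> subb" "\<Inter>\<U> = V"
      unfolding intersection_of_def by auto
    have "\<And>X. X \<in> \<U> \<Longrightarrow> openin filter_topology X"
    proof -
      fix X assume "X \<in> \<U>"
      then have "X \<in> subb" using U(2) by auto
      then show "openin filter_topology X" unfolding subb_def using subb_open by simp
    qed
    then have "openin filter_topology (filters \<inter> \<Inter>\<U>)"
      using openin_Int_Inter[OF U(1), of filter_topology filters] openin_topspace[of filter_topology]
      unfolding topspace_FT by simp
    moreover have "B = (filters \<inter> \<Inter>\<U>) \<inter> Ux x" using U(3) V(2) Uxf by auto
    ultimately show "openin (subtopology filter_topology (Ux x)) B"
      unfolding openin_subtopology by auto
  next
    fix W p assume W: "openin (subtopology filter_topology (Ux x)) W" "p \<in> W"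
    then obtain N where N: "openin filter_topology N" "W = N \<inter> Ux x" unfolding openin_subtopology by auto
    then have "p \<in> N" using W(2) by simp
    then obtain y Z where yZ: "finite Z" "p \<in> Bx y Z" "Bx y Z \<subseteq> N" using basis_lemma[OF N(1)] by metis
    define \<U> where "\<U> = insert (Ux y) ((\<lambda>z. filters - Ux z) ` Z)"
    have eq: "\<Inter>\<U> = Bx y Z" unfolding \<U>_def by (auto simp: Bx_def Ux_def)
    have "\<U> \<subseteq> subb" unfolding \<U>_def subb_def by auto
    moreover have "finite \<U>" unfolding \<U>_def using yZ(1) by simp
    ultimately have "(finite intersection_of (\<lambda>x. x \<in> subb)) (Bx y Z)"
      unfolding intersection_of_def using eq by auto
    then have P: "(finite intersection_of (\<lambda>x. x \<in> subb) relative_to Ux x) (Ux x \<inter> Bx y Z)"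
      unfolding relative_to_def by auto
    have "p \<in> Ux x \<inter> Bx y Z" using W(2) N(2) yZ(2) by simp
    moreover have "Ux x \<inter> Bx y Z \<subseteq> W" using N(2) yZ(3) by auto
    ultimately show "\<exists>B. (finite intersection_of (\<lambda>x. x \<in> subb) relative_to Ux x) B \<and> p \<in> B \<and> B \<subseteq> W"
      using P by auto
  qed
  have "compact_space (subtopology filter_topology (Ux x))"
    using Alexander_subbase_alt[of "Ux x" subb, OF h1 h2 h3] by simp
  then show ?thesis using compactin_subspace Uxf topspace_FT by metis
qed

lemma compact_Bx:
  assumes "finite Z"
  shows "compactin filter_topology (Bx (x::'a::{semilattice_inf,order_bot}) Z)"
proof -
  have cl: "closedin filter_topology (filters - \<Union>(Ux ` Z))"
    unfolding closedin_def topspace_FT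
  proof
    show "filters - \<Union>(Ux ` Z) \<subseteq> filters" by blast
    have "filters - (filters - \<Union>(Ux ` Z)) = \<Union>(Ux ` Z)" by (auto simp: Ux_def)
    moreover have "openin filter_topology (\<Union>(Ux ` Z))" using open_Ux by blast
    ultimately show "openin filter_topology (filters - (filters - \<Union>(Ux ` Z)))" by simp
  qed
  have "Bx x Z = (filters - \<Union>(Ux ` Z)) \<inter> Ux x" by (auto simp: Bx_def Ux_def)
  then show ?thesis using closed_Int_compactin[OF cl compact_Ux] by simp
qed

lemma Tc_Bx:
  assumes "finite Z"
  shows "Bx (x::'a::{semilattice_inf,order_bot}) Z \<inter> tight_filters \<in> Tc"
  unfolding Tc_def tight_topology_def
proof (intro CollectI conjI)
  show "openin (subtopology filter_topology tight_filters) (Bx x Z \<inter> tight_filters)"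
    unfolding openin_subtopology using open_Bx[OF assms] by blast
  have "closedin filter_topology (tight_filters :: 'a set set)"
    unfolding tight_filters_def by simp
  then have "compactin filter_topology (tight_filters \<inter> Bx x Z)"
    using closed_Int_compactin compact_Bx[OF assms] by blast
  then show "compactin (subtopology filter_topology tight_filters) (Bx x Z \<inter> tight_filters)"
    unfolding compactin_subtopology by (simp add: Int_commute)
qed

lemma Tc_decomp:
  assumes "(U :: 'a::{semilattice_inf,order_bot} set set) \<in> Tc"
  shows "\<exists>\<F>. finite \<F> \<and> (\<forall>B\<in>\<F>. \<exists>x Z. finite Z \<and> B = Bx x Z \<inter> tight_filters) \<and> U = \<Union>\<F>"
proof -
  have o: "openin tight_topology U" and c: "compactin tight_topology U"
    using assms unfolding Tc_def by blast+
  obtain N where N: "openin filter_topology N" "U = N \<inter> tight_filters"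
    using o unfolding tight_topology_def openin_subtopology by blast
  define \<C> where "\<C> = {B. (\<exists>x Z. finite Z \<and> B = Bx (x::'a) Z \<inter> tight_filters) \<and> B \<subseteq> U}"
  have "\<forall>B\<in>\<C>. openin tight_topology B"
    unfolding \<C>_def tight_topology_def openin_subtopology using open_Bx by blast
  moreover have "U \<subseteq> \<Union>\<C>"
  proof
    fix p assume p: "p \<in> U"
    then obtain x Z where "finite Z" "p \<in> Bx (x::'a) Z" "Bx x Z \<subseteq> N" using basis_lemma N by blast
    then show "p \<in> \<Union>\<C>" unfolding \<C>_def using N p by blast
  qed
  ultimately obtain \<F> where F: "finite \<F>" "\<F> \<subseteq> \<C>" "U \<subseteq> \<Union>\<F>"
    using c unfolding compactin_def by meson
  then have "U = \<Union>\<F>" unfolding \<C>_def by blast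
  then show ?thesis using F unfolding \<C>_def by blast
qed

lemma re_Bx:
  assumes e: "semilattice_embedding (\<iota> :: 'a::{semilattice_inf,order_bot} \<Rightarrow> 'b::{semilattice_inf,order_bot})"
    and pc: "preserves_finite_covers \<iota>"
  shows "re_preimage \<iota> (Bx x Z \<inter> tight_filters) = Bx (\<iota> x) (\<iota> ` Z) \<inter> tight_filters"
proof
  show "re_preimage \<iota> (Bx x Z \<inter> tight_filters) \<subseteq> Bx (\<iota> x) (\<iota> ` Z) \<inter> tight_filters"
    unfolding re_preimage_def using tight_filters_sub by (auto simp: Bx_def)
  show "Bx (\<iota> x) (\<iota> ` Z) \<inter> tight_filters \<subseteq> re_preimage \<iota> (Bx x Z \<inter> tight_filters)"
  proof
    fix \<xi> assume a: "\<xi> \<in> Bx (\<iota> x) (\<iota> ` Z) \<inter> tight_filters"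
    then have ne: "\<iota> -` \<xi> \<noteq> {}" by (auto simp: Bx_def)
    have xt: "\<xi> \<in> tight_filters" using a by blast
    have "\<iota> -` \<xi> \<in> tight_filters" using re_tight[OF e pc xt ne] .
    moreover have "\<iota> -` \<xi> \<in> filters" using calculation tight_filters_sub by blast
    ultimately show "\<xi> \<in> re_preimage \<iota> (Bx x Z \<inter> tight_filters)"
      using a ne unfolding re_preimage_def by (auto simp: Bx_def)
  qed
qed

lemma re_Union: "re_preimage \<iota> (\<Union>\<F>) = \<Union>(re_preimage \<iota> ` \<F>)"
  unfolding re_preimage_def by blast

lemma Tc_Union:
  assumes "finite \<F>" "\<F> \<subseteq> Tc" shows "\<Union>\<F> \<in> Tc"
  using assms unfolding Tc_def by (auto intro: compactin_Union)

theorem mainTheorem11: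
  fixes \<iota> :: "'a::{semilattice_inf,order_bot} \<Rightarrow> 'b::{semilattice_inf,order_bot}"
  assumes "semilattice_embedding \<iota>"
    and "preserves_finite_covers \<iota>"
    and "tight_inclusion \<iota>"
  defines "Y \<equiv> (\<Union>x. Vx (\<iota> x))"
  shows "re_preimage \<iota> ` (Tc :: 'a set set set) = {W \<in> (Tc :: 'b set set set). W \<subseteq> Y}"
proof
  note e = assms(1) and pc = assms(2)
  show "re_preimage \<iota> ` (Tc :: 'a set set set) \<subseteq> {W \<in> (Tc :: 'b set set set). W \<subseteq> Y}"
  proof
    fix W assume "W \<in> re_preimage \<iota> ` (Tc :: 'a set set set)"
    then obtain U :: "'a set set" where U: "U \<in> Tc" "W = re_preimage \<iota> U" by auto
    obtain \<F> where F: "finite \<F>" "\<forall>B\<in>\<F>. \<exists>x Z. finite Z \<and> B = Bx x Z \<inter> tight_filters" "U = \<Union>\<F>"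
      using Tc_decomp[OF U(1)] by auto
    have W: "W = \<Union>(re_preimage \<iota> ` \<F>)" using U(2) F(3) re_Union[of \<iota> \<F>] by simp
    have "re_preimage \<iota> ` \<F> \<subseteq> Tc"
    proof
      fix A assume "A \<in> re_preimage \<iota> ` \<F>"
      then obtain B where B: "B \<in> \<F>" "A = re_preimage \<iota> B" by auto
      then obtain x Z where xZ: "finite Z" "B = Bx x Z \<inter> tight_filters" using F(2) by auto
      have "A = Bx (\<iota> x) (\<iota> ` Z) \<inter> tight_filters" using B(2) xZ(2) re_Bx[OF e pc, of x Z] by simp
      moreover have "finite (\<iota> ` Z)" using xZ(1) by simp
      ultimately show "A \<in> Tc" using Tc_Bx by simp
    qed
    moreover have "finite (re_preimage \<iota> ` \<F>)" using F(1) by simp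
    ultimately have "W \<in> Tc" using W Tc_Union by simp
    moreover have "W \<subseteq> Y"
    proof
      fix \<xi> assume "\<xi> \<in> W"
      then have xt: "\<xi> \<in> tight_filters" and ne: "\<iota> -` \<xi> \<noteq> {}" using U(2) unfolding re_preimage_def by auto
      then obtain x where x: "\<iota> x \<in> \<xi>" by auto
      have "\<xi> \<in> filters" using xt tight_filters_sub by auto
      then have "\<xi> \<in> Vx (\<iota> x)" unfolding Vx_def Ux_def using x xt by simp
      then show "\<xi> \<in> Y" unfolding Y_def by auto
    qed
    ultimately show "W \<in> {W \<in> (Tc :: 'b set set set). W \<subseteq> Y}" by simp
  qed
  show "{W \<in> (Tc :: 'b set set set). W \<subseteq> Y} \<subseteq> re_preimage \<iota> ` (Tc :: 'a set set set)"
  proof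
    fix W :: "'b set set" assume W: "W \<in> {W \<in> Tc. W \<subseteq> Y}"
    then have WT: "W \<in> Tc" and WY: "W \<subseteq> Y" by auto
    define I where "I = re_preimage \<iota> ` (Tc :: 'a set set set)"
    have unI: "\<forall>A\<in>I. \<forall>B\<in>I. A \<union> B \<in> I" and intI: "\<forall>A\<in>I. \<forall>W\<in>(Tc :: 'b set set set). A \<inter> W \<in> I"
      using assms(3) unfolding tight_inclusion_def Let_def I_def by simp_all
    have Vx_eq: "Vx (\<iota> x) = re_preimage \<iota> (Bx x {} \<inter> tight_filters)" for x
      using re_Bx[OF e pc, of x "{}"] by (simp add: Bx_empty Vx_def)
    have VI: "Vx (\<iota> x) \<in> I" for x
    proof -
      have "Bx x {} \<inter> tight_filters \<in> Tc" using Tc_Bx[of "{}" x] by simp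
      then show ?thesis unfolding I_def Vx_eq by (rule imageI)
    qed
    have cW: "compactin tight_topology W" using WT unfolding Tc_def by simp
    have "\<forall>B\<in>range (\<lambda>x. Vx (\<iota> x)). openin tight_topology B"
    proof
      fix B assume "B \<in> range (\<lambda>x. Vx (\<iota> x))"
      then obtain x where "B = Vx (\<iota> x)" by auto
      then have "B = Ux (\<iota> x) \<inter> tight_filters" unfolding Vx_def by simp
      then show "openin tight_topology B"
        unfolding tight_topology_def openin_subtopology using open_Ux by auto
    qed
    moreover have "W \<subseteq> \<Union>(range (\<lambda>x. Vx (\<iota> x)))" using WY unfolding Y_def by simp
    ultimately obtain \<F> where F: "finite \<F>" "\<F> \<subseteq> range (\<lambda>x. Vx (\<iota> x))" "W \<subseteq> \<Union>\<F>"
      using cW unfolding compactin_def by meson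
    then obtain X0 where X0: "finite X0" "\<F> = (\<lambda>x. Vx (\<iota> x)) ` X0"
      using finite_subset_image[OF F(1) F(2)] by auto
    have emI: "{} \<in> I"
    proof -
      have "({} :: 'a set set) \<in> Tc" unfolding Tc_def by simp
      moreover have "re_preimage \<iota> {} = {}" unfolding re_preimage_def by simp
      ultimately show ?thesis unfolding I_def by (metis image_eqI)
    qed
    have "\<Union>((\<lambda>x. Vx (\<iota> x)) ` X0) \<in> I" using X0(1)
    proof (induction X0 rule: finite_induct)
      case empty then show ?case using emI by simp
    next
      case (insert x X)
      have "Vx (\<iota> x) \<union> \<Union>((\<lambda>x. Vx (\<iota> x)) ` X) \<in> I" using unI VI[of x] insert.IH by simp
      then show ?case by simp
    qed
    then have "\<Union>\<F> \<in> I" using X0(2) by simp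
    then have "\<Union>\<F> \<inter> W \<in> I" using intI WT by simp
    moreover have "\<Union>\<F> \<inter> W = W" using F(3) by auto
    ultimately show "W \<in> re_preimage \<iota> ` (Tc :: 'a set set set)" unfolding I_def by simp
  qed
qed

thm_deps mainTheorem11

end
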